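(* Let $b>0$ and $\varepsilon\in\mathbb R$ with $b+\varepsilon>0$ and $\varepsilon\neq0$. Then the matrix $P(b,\varepsilon,0)$ has two eigenvalues $\lambda_1,\lambda_2$ with $0<\lambda_1<1$ and $\lambda_2=\lambda_1^{-1}>1$, with corresponding eigenvectors $v_1=(1,f_1)^T$ and $v_2=(1,f_1^{-1})^T$, where $$f_1=\frac{-\alpha+\gamma-\sqrt{(\alpha-\gamma)^2-4\beta^2}}{2\beta}$$ satisfies $f_1<-1$ if $\varepsilon<0$ and $f_1\in(-1,0)$ if $\varepsilon>0$.
   Context: For $k\in\mathbb R$ let $A_1=\begin{pmatrix}-b&0\\-b&-(b+\varepsilon)e^{-ik}\end{pmatrix}$, $A_2=\begin{pmatrix}-b&-(b+\varepsilon)e^{ik}\\0&-b\end{pmatrix}$, $A_3=\begin{pmatrix}-(b+\varepsilon)e^{-ik}&0\\-b&-b\end{pmatrix}$, $A_4=\begin{pmatrix}-b&-b\\0&-(b+\varepsilon)\end{pmatrix}$, $A_5=\begin{pmatrix}-b&0\\-(b+\varepsilon)e^{ik}&-b\end{pmatrix}$, $A_6=\begin{pmatrix}-(b+\varepsilon)&-b\\0&-b\end{pmatrix}$, and $P(b,\varepsilon,k)=-A_6^{-1}A_5A_4^{-1}A_3A_2^{-1}A_1$. With $t=(b+\varepsilon)/b$, define $\alpha=-t^2+2t-\frac4t+\frac4{t^2}$, $\beta=-t^3+t^2+t-3+\frac2t$, $\gamma=t^4-t^2+2t-1$ (these are the entries of $P(b,\varepsilon,0)=\begin{pmatrix}\alpha&\beta\\-\beta&\gamma\end{pmatrix}$).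 *)

theory Defs
  imports "HOL-Analysis.Analysis"
begin

definition mat2 :: "complex \<Rightarrow> complex \<Rightarrow> complex \<Rightarrow> complex \<Rightarrow> complex^2^2" where
  "mat2 a b c d = vector [vector [a, b], vector [c, d]]"

definition A1 :: "real \<Rightarrow> real \<Rightarrow> real \<Rightarrow> complex^2^2" where
  "A1 b e k = mat2 (- of_real b) 0 (- of_real b) (- of_real (b + e) * exp (- \<i> * of_real k))"
definition A2 :: "real \<Rightarrow> real \<Rightarrow> real \<Rightarrow> complex^2^2" where
  "A2 b e k = mat2 (- of_real b) (- of_real (b + e) * exp (\<i> * of_real k)) 0 (- of_real b)"
definition A3 :: "real \<Rightarrow> real \<Rightarrow> real \<Rightarrow> complex^2^2" where
  "A3 b e k = mat2 (- of_real (b + e) * exp (- \<i> * of_real k)) 0 (- of_real b) (- of_real b)"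
definition A4 :: "real \<Rightarrow> real \<Rightarrow> real \<Rightarrow> complex^2^2" where
  "A4 b e k = mat2 (- of_real b) (- of_real b) 0 (- of_real (b + e))"
definition A5 :: "real \<Rightarrow> real \<Rightarrow> real \<Rightarrow> complex^2^2" where
  "A5 b e k = mat2 (- of_real b) 0 (- of_real (b + e) * exp (\<i> * of_real k)) (- of_real b)"
definition A6 :: "real \<Rightarrow> real \<Rightarrow> real \<Rightarrow> complex^2^2" where
  "A6 b e k = mat2 (- of_real (b + e)) (- of_real b) 0 (- of_real b)"

definition Pmat :: "real \<Rightarrow> real \<Rightarrow> real \<Rightarrow> complex^2^2" where
  "Pmat b e k = - (matrix_inv (A6 b e k) ** A5 b e k ** matrix_inv (A4 b e k) ** A3 b e k
                   ** matrix_inv (A2 b e k) ** A1 b e k)"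

definition tpar :: "real \<Rightarrow> real \<Rightarrow> real" where "tpar b e = (b + e) / b"

definition alpha :: "real \<Rightarrow> real \<Rightarrow> real" where
  "alpha b e = (let t = tpar b e in - (t ^ 2) + 2 * t - 4 / t + 4 / (t ^ 2))"
definition beta :: "real \<Rightarrow> real \<Rightarrow> real" where
  "beta b e = (let t = tpar b e in - (t ^ 3) + t ^ 2 + t - 3 + 2 / t)"
definition gamma :: "real \<Rightarrow> real \<Rightarrow> real" where
  "gamma b e = (let t = tpar b e in t ^ 4 - t ^ 2 + 2 * t - 1)"

definition f1 :: "real \<Rightarrow> real \<Rightarrow> real" where
  "f1 b e = (- alpha b e + gamma b e - sqrt ((alpha b e - gamma b e)^2 - 4 * (beta b e)^2))
            / (2 * beta b e)"

definition eigenvalues2 :: "complex^2^2 \<Rightarrow> complex set" where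
  "eigenvalues2 M = {\<mu>. \<exists>v. v \<noteq> 0 \<and> M *v v = \<mu> *s v}"

end

theory Submission
  imports Defs
begin


lemma vec2_eq: "(x::'a^2) = y \<longleftrightarrow> x$1 = y$1 \<and> x$2 = y$2"
  by (metis exhaust_2 vec_eq_iff)

lemma mat2_nth [simp]: "mat2 a b c d $ 1 $ 1 = a" "mat2 a b c d $ 1 $ 2 = b"
  "mat2 a b c d $ 2 $ 1 = c" "mat2 a b c d $ 2 $ 2 = d"
  by (simp_all add: mat2_def)

lemma mat2_eq_iff: "mat2 a b c d = mat2 a' b' c' d' \<longleftrightarrow> a=a' \<and> b=b' \<and> c=c' \<and> d=d'"
  by (metis mat2_nth)

lemma mat2_mult: "mat2 a b c d ** mat2 e f g h = mat2 (a*e+b*g) (a*f+b*h) (c*e+d*g) (c*f+d*h)"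
  by (simp add: vec2_eq matrix_matrix_mult_def sum_2)

lemma mat2_one: "mat 1 = mat2 1 0 0 1"
  by (simp add: vec2_eq mat_def)

lemma mat2_neg: "- mat2 a b c d = mat2 (-a) (-b) (-c) (-d)"
  by (simp add: vec2_eq)

lemma mat2_vec: "mat2 a b c d *v vector [x, y] = vector [a*x+b*y, c*x+d*y]"
  by (simp add: vec2_eq matrix_vector_mult_def sum_2)

lemma mat2_vec': "mat2 a b c d *v w = vector [a * w$1 + b * w$2, c * w$1 + d * w$2]"
  by (simp add: vec2_eq matrix_vector_mult_def sum_2)

lemma scal2: "(c::complex) *s (vector [x, y] :: complex^2) = vector [c*x, c*y]"
  by (simp add: vec2_eq)

lemma matrix_inv_eq:
  fixes A B :: "'a::comm_ring_1^'n^'n"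
  assumes "A ** B = mat 1" "B ** A = mat 1"
  shows "matrix_inv A = B"
proof -
  let ?C = "matrix_inv A"
  have "A ** ?C = mat 1 \<and> ?C ** A = mat 1"
    unfolding matrix_inv_def by (rule someI[of _ B]) (use assms in auto)
  then have "?C = ?C ** (A ** B)" "?C ** A = mat 1" using assms by (auto simp: matrix_mul_rid)
  then show ?thesis by (metis matrix_mul_assoc matrix_mul_lid)
qed

lemma mat2_inv:
  assumes "a*d - b*c \<noteq> (0::complex)"
  shows "matrix_inv (mat2 a b c d) = mat2 (d/(a*d-b*c)) (-b/(a*d-b*c)) (-c/(a*d-b*c)) (a/(a*d-b*c))"
  apply (rule matrix_inv_eq)
  using assms by (simp_all add: mat2_mult mat2_one mat2_eq_iff divide_simps)

lemma eig2:
  fixes a bb g l1 l2 :: complex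
  assumes sum: "l1 + l2 = a + g" and pr: "l1 * l2 = a * g + bb^2"
    and e1: "mat2 a bb (-bb) g *v vector [1, x1] = l1 *s vector [1, x1]"
    and e2: "mat2 a bb (-bb) g *v vector [1, x2] = l2 *s vector [1, x2]"
  shows "eigenvalues2 (mat2 a bb (-bb) g) = {l1, l2}"
proof
  have nz: "(vector [1, x] :: complex^2) \<noteq> 0" for x
    by (simp add: vec2_eq)
  show "{l1, l2} \<subseteq> eigenvalues2 (mat2 a bb (-bb) g)"
    unfolding eigenvalues2_def using e1 e2 nz by blast
  show "eigenvalues2 (mat2 a bb (-bb) g) \<subseteq> {l1, l2}"
  proof
    fix mu assume "mu \<in> eigenvalues2 (mat2 a bb (-bb) g)"
    then obtain w where w0: "w \<noteq> 0" and ew: "mat2 a bb (-bb) g *v w = mu *s w"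
      unfolding eigenvalues2_def by blast
    from ew have r1: "a * w$1 + bb * w$2 = mu * w$1" and r2: "- bb * w$1 + g * w$2 = mu * w$2"
      by (simp_all add: mat2_vec' vec2_eq)
    have "(mu - l1) * (mu - l2) = mu^2 - (l1+l2)*mu + l1*l2" by (simp add: algebra_simps power2_eq_square)
    also have "\<dots> = mu^2 - (a+g)*mu + (a*g+bb^2)" by (simp only: sum pr)
    also have "\<dots> = (a-mu)*(g-mu)+bb^2" by (simp add: algebra_simps power2_eq_square)
    finally have q: "(mu - l1) * (mu - l2) = (a - mu) * (g - mu) + bb^2" .
    have "((a - mu) * (g - mu) + bb^2) * w$1 = (g - mu) * (a * w$1 + bb * w$2 - mu * w$1) - bb * (- bb * w$1 + g * w$2 - mu * w$2)"
      by (simp add: algebra_simps power2_eq_square)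
    then have z1: "((a - mu) * (g - mu) + bb^2) * w$1 = 0" using r1 r2 by simp
    have "((a - mu) * (g - mu) + bb^2) * w$2 = bb * (a * w$1 + bb * w$2 - mu * w$1) + (a - mu) * (- bb * w$1 + g * w$2 - mu * w$2)"
      by (simp add: algebra_simps power2_eq_square)
    then have z2: "((a - mu) * (g - mu) + bb^2) * w$2 = 0" using r1 r2 by simp
    have "w$1 \<noteq> 0 \<or> w$2 \<noteq> 0" using w0 by (auto simp: vec2_eq)
    then have "(a - mu) * (g - mu) + bb^2 = 0" using z1 z2 by auto
    then show "mu \<in> {l1, l2}" using q by auto
  qed
qed

lemma abstract:
  fixes a bb g :: real
  assumes det: "a*g + bb^2 = 1" and tr: "a + g > 2" and bb0: "bb \<noteq> 0" and sg: "(g-a)*bb < 0"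
  defines "f \<equiv> (- a + g - sqrt ((a - g)^2 - 4 * bb^2)) / (2 * bb)"
  defines "M \<equiv> mat2 (of_real a) (of_real bb) (of_real (- bb)) (of_real g)"
  shows "\<exists>l1 l2 :: real.
           0 < l1 \<and> l1 < 1 \<and> l2 = inverse l1 \<and> l2 > 1 \<and>
           eigenvalues2 M = {complex_of_real l1, complex_of_real l2} \<and>
           M *v vector [1, complex_of_real f]
             = complex_of_real l1 *s vector [1, complex_of_real f] \<and>
           M *v vector [1, complex_of_real (inverse f)]
             = complex_of_real l2 *s vector [1, complex_of_real (inverse f)] \<and>
           (bb > 0 \<longrightarrow> f < -1) \<and>
           (bb < 0 \<longrightarrow> -1 < f \<and> f < 0)"
proof -
  define D where "D = (a - g)^2 - 4 * bb^2"
  define s where "s = sqrt D"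
  have D: "D = (a+g)^2 - 4" using det unfolding D_def by algebra
  have "(2::real)^2 < (a+g)^2" using tr by (intro power_strict_mono) auto
  then have Dpos: "D > 0" unfolding D by simp
  have s0: "s > 0" unfolding s_def using Dpos by simp
  have ss: "s^2 = D" unfolding s_def using Dpos by simp
  have "s^2 < (a+g)^2" using ss D by simp
  then have slt: "s < a + g"
    by (rule power_less_imp_less_base) (use tr in linarith)
  define l1 where "l1 = (a + g - s)/2"
  define l2 where "l2 = (a + g + s)/2"
  have "l1 * l2 = ((a+g)^2 - s^2)/4" unfolding l1_def l2_def
    by (simp add: field_simps power2_eq_square)
  then have prod: "l1 * l2 = 1" using ss D by simp
  have l1pos: "l1 > 0" unfolding l1_def using slt by simp
  have l12: "l1 < l2" unfolding l1_def l2_def using s0 by simp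
  have "l1 * l1 < l1 * l2" using l1pos l12 by simp
  then have "l1 * l1 < 1 * 1" using prod by simp
  then have l1lt: "l1 < 1" using l1pos by (metis less_eq_real_def mult_mono' not_le zero_le_one)
  have l2inv: "l2 = inverse l1" using prod l1pos by (simp add: field_simps)
  have l2gt: "l2 > 1" unfolding l2inv using l1pos l1lt by (simp add: one_less_inverse)
  have fdef: "f = (g - a - s) / (2 * bb)" unfolding f_def s_def D_def by simp
  have finv: "inverse f = (g - a + s) / (2 * bb)"
  proof -
    have "f * ((g - a + s) / (2 * bb)) = ((g-a)^2 - s^2) / (4 * bb^2)"
      unfolding fdef by (simp add: field_simps power2_eq_square)
    also have "\<dots> = 1" using ss bb0 unfolding D_def by (simp add: power2_commute[of a g])
    finally have "f * ((g - a + s) / (2 * bb)) = 1" .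
    then show ?thesis by (metis inverse_unique)
  qed
  have "4 * bb * (bb * f^2 + (a - g) * f + bb) = s^2 - (g-a)^2 + 4*bb^2"
    unfolding fdef using bb0 by (simp add: field_simps power2_eq_square)
  also have "\<dots> = 0" using ss unfolding D_def by (simp add: power2_commute[of a g])
  finally have quad: "bb * f^2 + (a - g) * f + bb = 0" using bb0 by simp
  have ev1a: "a + bb * f = l1" unfolding fdef l1_def using bb0 by (simp add: field_simps)
  have ev1b: "- bb + g * f = l1 * f"
  proof -
    have "l1*f = a*f + bb*f^2" unfolding ev1a[symmetric] by (simp add: power2_eq_square algebra_simps)
    moreover have "(a - g) * f = a*f - g*f" by (simp add: algebra_simps)
    ultimately show ?thesis using quad by linarith
  qed
  have ev2a: "a + bb * inverse f = l2" unfolding finv l2_def using bb0 by (simp add: field_simps)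
  have "s^2 < (g-a)^2" using ss bb0 unfolding D_def by (simp add: power2_commute[of a g])
  then have "s \<noteq> g - a" by auto
  then have f0: "f \<noteq> 0" unfolding fdef using bb0 by simp
  have "- bb * f + g = l2" unfolding fdef l2_def using bb0 by (simp add: field_simps)
  then have "(- bb * f + g) * inverse f = l2 * inverse f" by simp
  then have ev2b: "- bb + g * inverse f = l2 * inverse f" using f0 by (simp add: algebra_simps)
  have ce1: "complex_of_real a + complex_of_real bb * complex_of_real f = complex_of_real l1"
    by (simp flip: ev1a)
  have ce2: "- complex_of_real bb + complex_of_real g * complex_of_real f = complex_of_real l1 * complex_of_real f"
    by (metis ev1b of_real_add of_real_minus of_real_mult)
  have ce3: "complex_of_real a + complex_of_real bb * complex_of_real (inverse f) = complex_of_real l2"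
    by (metis ev2a of_real_add of_real_mult)
  have ce4: "- complex_of_real bb + complex_of_real g * complex_of_real (inverse f) = complex_of_real l2 * complex_of_real (inverse f)"
    by (metis ev2b of_real_add of_real_minus of_real_mult)
  have V1: "M *v vector [1, complex_of_real f] = complex_of_real l1 *s vector [1, complex_of_real f]"
    unfolding M_def mat2_vec scal2 using ce1 ce2 by simp
  have V2: "M *v vector [1, complex_of_real (inverse f)] = complex_of_real l2 *s vector [1, complex_of_real (inverse f)]"
    unfolding M_def mat2_vec scal2 using ce3 ce4 by simp
  have sm: "l1 + l2 = a + g" unfolding l1_def l2_def by (simp add: field_simps)
  have E: "eigenvalues2 M = {complex_of_real l1, complex_of_real l2}"
    unfolding M_def of_real_minus
  proof (rule eig2)
    show "complex_of_real l1 + complex_of_real l2 = complex_of_real a + complex_of_real g"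
      by (metis sm of_real_add)
    show "complex_of_real l1 * complex_of_real l2 = complex_of_real a * complex_of_real g + (complex_of_real bb)^2"
      by (metis prod det of_real_add of_real_mult of_real_power)
  qed (use V1 V2 in \<open>simp_all add: M_def\<close>)
  have "\<not> (s \<le> 0)" using s0 by simp
  have sg1: "bb > 0 \<Longrightarrow> f < -1"
  proof -
    assume bp: "bb > 0"
    then have "g - a < 0" using sg by (simp add: mult_less_0_iff)
    have "(2*bb)^2 < (g-a)^2" using ss Dpos unfolding D_def by (simp add: power2_commute[of a g] power_mult_distrib)
    then have "\<bar>2*bb\<bar>^2 < \<bar>g-a\<bar>^2" by simp
    then have "\<bar>2*bb\<bar> < \<bar>g-a\<bar>" by (rule power_less_imp_less_base) simp
    then have "2*bb < a - g" using bp \<open>g - a < 0\<close> by linarith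
    then have "g - a - s < -(2*bb)" using s0 by simp
    then show "f < -1" unfolding fdef using bp by (simp add: divide_less_eq)
  qed
  have sg2: "bb < 0 \<Longrightarrow> -1 < f \<and> f < 0"
  proof -
    assume bn: "bb < 0"
    then have gpos: "g - a > 0" using sg by (simp add: mult_less_0_iff)
    have sl: "s < g - a" using \<open>s^2 < (g-a)^2\<close> gpos
      using power_less_imp_less_base by fastforce
    have "(2*bb)^2 < (g-a)^2" using ss Dpos unfolding D_def by (simp add: power2_commute[of a g] power_mult_distrib)
    then have "\<bar>2*bb\<bar>^2 < \<bar>g-a\<bar>^2" by simp
    then have "\<bar>2*bb\<bar> < \<bar>g-a\<bar>" by (rule power_less_imp_less_base) simp
    then have "-(2*bb) < g - a" using bn gpos by linarith
    then have "g - a + 2*bb > 0" by simp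
    have "(g - a + 2*bb)^2 < s^2"
    proof -
      have "(g - a + 2*bb)^2 = (g-a)^2 + 4*bb*(g-a) + 4*bb^2" by (simp add: power2_eq_square algebra_simps)
      moreover have "s^2 = (g-a)^2 - 4*bb^2" using ss unfolding D_def by (simp add: power2_commute[of a g])
      moreover have "bb*(g-a) + 2*bb^2 < 0"
      proof -
        have "bb*(g-a+2*bb) < 0" using bn \<open>g - a + 2*bb > 0\<close> by (simp add: mult_neg_pos)
        then show ?thesis by (simp add: algebra_simps power2_eq_square)
      qed
      ultimately show ?thesis by linarith
    qed
    then have "g - a + 2*bb < s" by (rule power_less_imp_less_base) (use s0 in linarith)
    then have "-1 < f" unfolding fdef using bn by (simp add: less_divide_eq)
    moreover have "f < 0" unfolding fdef using bn sl by (simp add: divide_less_0_iff)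
    ultimately show ?thesis by simp
  qed
  show ?thesis
    apply (rule exI[of _ l1], rule exI[of _ l2])
    apply (intro conjI impI)
    apply (fact l1pos)
    apply (fact l1lt)
    apply (fact l2inv)
    apply (fact l2gt)
    apply (fact E)
    apply (fact V1)
    apply (fact V2)
    apply (erule sg1)
    apply (drule sg2, erule conjunct1)
    apply (drule sg2, erule conjunct2)
    done
qed

lemma Pmat0:
  assumes "b > 0" "b + e > 0"
  shows "Pmat b e 0 = mat2 (of_real (alpha b e)) (of_real (beta b e)) (of_real (- beta b e)) (of_real (gamma b e))"
proof -
  define B where "B = (of_real b :: complex)"
  define C where "C = (of_real (b+e) :: complex)"
  have B0: "B \<noteq> 0" using assms by (simp add: B_def)
  have C0: "C \<noteq> 0" unfolding C_def of_real_eq_0_iff using assms by simp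
  have t: "of_real (tpar b e) = C / B" by (simp add: tpar_def B_def C_def)
  have P: "Pmat b e 0 = - (matrix_inv (mat2 (-C) (-B) 0 (-B)) ** mat2 (-B) 0 (-C) (-B) ** matrix_inv (mat2 (-B) (-B) 0 (-C)) ** mat2 (-C) 0 (-B) (-B)
                   ** matrix_inv (mat2 (-B) (-C) 0 (-B)) ** mat2 (-B) 0 (-B) (-C))"
    by (simp add: Pmat_def A1_def A2_def A3_def A4_def A5_def A6_def B_def C_def)
  show ?thesis
    unfolding P using B0 C0
    apply (simp add: mat2_inv mat2_mult mat2_neg mat2_eq_iff)
    apply (simp add: alpha_def beta_def gamma_def Let_def t)
    apply (simp add: field_simps)
    apply (intro conjI; algebra)
    done
qed



lemma realfacts:
  fixes b e :: real
  assumes b0: "b > 0" and be0: "b + e > 0" and e0: "e \<noteq> 0"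
  shows "alpha b e * gamma b e + (beta b e)^2 = 1" "alpha b e + gamma b e > 2"
    "(gamma b e - alpha b e) * beta b e < 0" "e < 0 \<Longrightarrow> beta b e > 0" "e > 0 \<Longrightarrow> beta b e < 0"
proof -
  define t where "t = tpar b e"
  have t0: "t > 0" unfolding t_def tpar_def using b0 be0 by simp
  have t1: "t \<noteq> 1" unfolding t_def tpar_def using b0 e0 by simp
  have tlt: "e < 0 \<Longrightarrow> t < 1" and tgt: "e > 0 \<Longrightarrow> t > 1"
    unfolding t_def tpar_def using b0 by (simp_all add: field_simps)
  define pa where "pa = - (t^4)+2*t^3-4*t+4"
  define pb where "pb = - (t^4)+t^3+t^2-3*t+2"
  define pg where "pg = t^4-t^2+2*t-1"
  have A: "alpha b e = pa / t^2" unfolding alpha_def Let_def t_def[symmetric] pa_def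
    using t0 by (simp add: field_simps power2_eq_square power3_eq_cube power4_eq_xxxx)
  have B: "beta b e = pb / t" unfolding beta_def Let_def t_def[symmetric] pb_def
    using t0 by (simp add: field_simps power2_eq_square power3_eq_cube power4_eq_xxxx)
  have G: "gamma b e = pg" unfolding gamma_def Let_def t_def[symmetric] pg_def by simp
  have id1: "pa * pg + pb^2 = t^2" unfolding pa_def pb_def pg_def by algebra
  show "alpha b e * gamma b e + (beta b e)^2 = 1"
    unfolding A B G using t0 id1 by (simp add: field_simps)
  have q0: "t^4+2*t^3+t^2+4*t+4 > 0" using t0 by (simp add: add_pos_pos)
  have id2: "pa + t^2 * pg - 2*t^2 = (t-1)^2 * (t^4+2*t^3+t^2+4*t+4)" unfolding pa_def pg_def by algebra
  have "(t-1)^2 > 0" using t1 by simp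
  then have "pa + t^2 * pg - 2*t^2 > 0" unfolding id2 using q0 by simp
  then have "pa / t^2 + pg - 2 > 0" using t0 by (simp add: field_simps)
  then show "alpha b e + gamma b e > 2" unfolding A G by simp
  have c0: "t^3 - t + 2 > 0"
  proof (cases "t \<ge> 1")
    case True
    then have "t^3 \<ge> t" by (metis power_increasing[of 1 3 t] power_one_right numeral_le_iff semiring_norm(72) one_le_numeral)
    then show ?thesis by simp
  next
    case False
    then show ?thesis using t0 by (smt (verit) zero_less_power)
  qed
  have id3: "pb = -(t-1)*(t^3-t+2)" unfolding pb_def by algebra
  show "e < 0 \<Longrightarrow> beta b e > 0" unfolding B id3 using tlt c0 t0
    by (simp add: mult_pos_pos)
  show "e > 0 \<Longrightarrow> beta b e < 0" unfolding B id3 using tgt c0 t0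
    by (simp add: mult_neg_pos divide_neg_pos)
  have k0: "t^2*(t+1)*(t^2+1)+4 > 0" using t0 by (simp add: add_pos_pos)
  have id4: "t^2*pg - pa = (t-1)*(t^2*(t+1)*(t^2+1)+4)" unfolding pa_def pg_def by algebra
  have "(gamma b e - alpha b e) * beta b e = (t^2*pg - pa) * pb / t^3"
    unfolding A B G using t0 by (simp add: field_simps power2_eq_square power3_eq_cube)
  also have "\<dots> = - ((t-1)^2 * (t^2*(t+1)*(t^2+1)+4) * (t^3-t+2)) / t^3"
    unfolding id4 id3 by (simp add: power2_eq_square algebra_simps)
  also have "\<dots> < 0" using k0 c0 t0 \<open>(t-1)^2 > 0\<close> by (simp add: divide_neg_pos mult_pos_pos)
  finally show "(gamma b e - alpha b e) * beta b e < 0" .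
qed


theorem theorem8:
  fixes b \<epsilon> :: real
  assumes "b > 0" and "b + \<epsilon> > 0" and "\<epsilon> \<noteq> 0"
  shows "\<exists>l1 l2 :: real.
           0 < l1 \<and> l1 < 1 \<and> l2 = inverse l1 \<and> l2 > 1 \<and>
           eigenvalues2 (Pmat b \<epsilon> 0) = {complex_of_real l1, complex_of_real l2} \<and>
           Pmat b \<epsilon> 0 *v vector [1, complex_of_real (f1 b \<epsilon>)]
             = complex_of_real l1 *s vector [1, complex_of_real (f1 b \<epsilon>)] \<and>
           Pmat b \<epsilon> 0 *v vector [1, complex_of_real (inverse (f1 b \<epsilon>))]
             = complex_of_real l2 *s vector [1, complex_of_real (inverse (f1 b \<epsilon>))] \<and>
           (\<epsilon> < 0 \<longrightarrow> f1 b \<epsilon> < -1) \<and>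
           (\<epsilon> > 0 \<longrightarrow> -1 < f1 b \<epsilon> \<and> f1 b \<epsilon> < 0)"
proof -
  note rf = realfacts[OF assms]
  have bne: "beta b \<epsilon> \<noteq> 0" using rf(3) by auto
  obtain l1 l2 :: real where H:
    "0 < l1" "l1 < 1" "l2 = inverse l1" "l2 > 1"
    "eigenvalues2 (Pmat b \<epsilon> 0) = {complex_of_real l1, complex_of_real l2}"
    "Pmat b \<epsilon> 0 *v vector [1, complex_of_real (f1 b \<epsilon>)]
             = complex_of_real l1 *s vector [1, complex_of_real (f1 b \<epsilon>)]"
    "Pmat b \<epsilon> 0 *v vector [1, complex_of_real (inverse (f1 b \<epsilon>))]
             = complex_of_real l2 *s vector [1, complex_of_real (inverse (f1 b \<epsilon>))]"
    "beta b \<epsilon> > 0 \<longrightarrow> f1 b \<epsilon> < -1"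
    "beta b \<epsilon> < 0 \<longrightarrow> -1 < f1 b \<epsilon> \<and> f1 b \<epsilon> < 0"
    using abstract[OF rf(1) rf(2) bne rf(3)]
    unfolding Pmat0[OF assms(1,2)] f1_def[symmetric] by blast
  show ?thesis
    apply (rule exI[of _ l1], rule exI[of _ l2])
    using H rf(4) rf(5) by simp
qed

end
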